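(* For every natural number $m$, $$s(m)=\left|\{\sigma\in S_\infty:\ \mathcal{LF}_2(\sigma)=m\}\right|.$$
   Context: $S_n$ is the group of permutations of $[n]=\{1,\dots,n\}$. For $\sigma\in S_n$ and $i\in[n]$, $c_i(\sigma)=|\{j\in[n]: j>i,\ \sigma(j)<\sigma(i)\}|$, $k_i(\sigma)=c_{n-i}(\sigma)$ for $i=0,\dots,n-1$, and $\mathcal{LF}_2(\sigma)=\sum_{i=0}^{n-1}[2^i-2^{i-k_i(\sigma)}]$. Let $\iota_n:S_n\to S_{n+1}$, $\iota_n(\sigma)=(1,\sigma(1)+1,\dots,\sigma(n)+1)$; it preserves $\mathcal{LF}_2$. Here $S_\infty$ is the direct limit of $(S_n,\iota_n)_{n\ge1}$ (which is isomorphic to the group of finitely supported permutations of the positive integers), and $\mathcal{LF}_2$ is the induced function on $S_\infty$. For $m>0$ and $k\ge0$, $S_k(m)$ is the set of all sequences $((m_1,l_1),\dots,(m_t,l_t))$, $t\ge1$, of pairs of natural numbers with $k=m_1>m_2>\dots>m_t\ge0$, $m_j\ge l_j\ge0$, and $m=\sum_{j=1}^t\sum_{p=0}^{l_j}2^{m_j-p}$; $s_k(m)=|S_k(m)|$ (nonzero for only finitely many $k$), $s(m)=\sum_{k=0}^\infty s_k(m)$ for $m>0$, and $s(0)=1$. *)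

theory Defs
  imports "HOL-Combinatorics.Permutations"
begin

definition Sn :: "nat \<Rightarrow> (nat \<Rightarrow> nat) set" where
  "Sn n = {\<sigma>. \<sigma> permutes {1..n}}"

definition cc :: "nat \<Rightarrow> (nat \<Rightarrow> nat) \<Rightarrow> nat \<Rightarrow> nat" where
  "cc n \<sigma> i = card {j \<in> {1..n}. j > i \<and> \<sigma> j < \<sigma> i}"

definition kk :: "nat \<Rightarrow> (nat \<Rightarrow> nat) \<Rightarrow> nat \<Rightarrow> nat" where
  "kk n \<sigma> i = cc n \<sigma> (n - i)"

definition LF2 :: "nat \<Rightarrow> (nat \<Rightarrow> nat) \<Rightarrow> nat" where
  "LF2 n \<sigma> = (\<Sum>i<n. (2 ^ i - 2 ^ (i - kk n \<sigma> i)))"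

definition iota :: "nat \<Rightarrow> (nat \<Rightarrow> nat) \<Rightarrow> (nat \<Rightarrow> nat)" where
  "iota n \<sigma> = (\<lambda>j. if j = 1 then 1 else if 2 \<le> j \<and> j \<le> n + 1 then \<sigma> (j - 1) + 1 else j)"

fun iota_iter :: "nat \<Rightarrow> nat \<Rightarrow> (nat \<Rightarrow> nat) \<Rightarrow> (nat \<Rightarrow> nat)" where
  "iota_iter 0 n \<sigma> = \<sigma>"
| "iota_iter (Suc d) n \<sigma> = iota (n + d) (iota_iter d n \<sigma>)"

text \<open>Direct limit of (S_n, iota_n)_{n>=1}: equivalence classes of pairs (n, sigma), sigma in S_n.\<close>
definition limrel :: "((nat \<times> (nat \<Rightarrow> nat)) \<times> (nat \<times> (nat \<Rightarrow> nat))) set" where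
  "limrel = {((n, \<sigma>), (n', \<sigma>')). n \<ge> 1 \<and> n' \<ge> 1 \<and> \<sigma> \<in> Sn n \<and> \<sigma>' \<in> Sn n' \<and>
      (\<exists>N. N \<ge> n \<and> N \<ge> n' \<and> iota_iter (N - n) n \<sigma> = iota_iter (N - n') n' \<sigma>')}"

definition S_inf :: "(nat \<times> (nat \<Rightarrow> nat)) set set" where
  "S_inf = (SIGMA n:{1..}. Sn n) // limrel"

definition LF2_inf :: "(nat \<times> (nat \<Rightarrow> nat)) set \<Rightarrow> nat" where
  "LF2_inf X = the_elem ((\<lambda>(n, \<sigma>). LF2 n \<sigma>) ` X)"

definition Sk :: "nat \<Rightarrow> nat \<Rightarrow> (nat \<times> nat) list set" where
  "Sk k m = {ps. ps \<noteq> [] \<and> fst (hd ps) = k \<and> sorted_wrt (\<lambda>a b. fst a > fst b) ps \<and>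
      (\<forall>(mj, lj) \<in> set ps. lj \<le> mj) \<and>
      m = (\<Sum>(mj, lj) \<leftarrow> ps. \<Sum>p = 0..lj. 2 ^ (mj - p))}"

definition sk :: "nat \<Rightarrow> nat \<Rightarrow> nat" where
  "sk k m = card (Sk k m)"

definition s :: "nat \<Rightarrow> nat" where
  "s m = (if m = 0 then 1 else (\<Sum>k \<in> {k. sk k m \<noteq> 0}. sk k m))"

end

theory Submission
  imports Defs "HOL-Library.FuncSet"
begin


lemma cc_le: "cc n \<sigma> j \<le> n - j"
proof -
  have "{j' \<in> {1..n}. j' > j \<and> \<sigma> j' < \<sigma> j} \<subseteq> {j<..n}" by auto
  then have "cc n \<sigma> j \<le> card {j<..n}" unfolding cc_def by (intro card_mono) auto
  then show ?thesis by simp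
qed

lemma cc_rank:
  assumes p: "\<sigma> permutes {1..n}" and i: "i \<in> {1..n}"
  shows "cc n \<sigma> i = card {v \<in> \<sigma> ` {j \<in> {1..n}. j \<ge> i}. v < \<sigma> i}"
proof -
  have inj: "inj \<sigma>" using p by (rule permutes_inj)
  have "{v \<in> \<sigma> ` {j \<in> {1..n}. j \<ge> i}. v < \<sigma> i} = \<sigma> ` {j \<in> {1..n}. j > i \<and> \<sigma> j < \<sigma> i}"
    using i by (auto simp: le_less)
  then show ?thesis unfolding cc_def
    by (simp add: card_image inj_on_subset[OF inj])
qed

lemma lehmer_inj:
  assumes p: "\<sigma> permutes {1..n}" and q: "\<tau> permutes {1..n}"
    and c: "\<And>j. j \<in> {1..n} \<Longrightarrow> cc n \<sigma> j = cc n \<tau> j"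
  shows "\<sigma> = \<tau>"
proof (rule ccontr)
  assume "\<sigma> \<noteq> \<tau>"
  then have ex: "\<exists>i. \<sigma> i \<noteq> \<tau> i" by auto
  define i where "i = (LEAST i. \<sigma> i \<noteq> \<tau> i)"
  have ne: "\<sigma> i \<noteq> \<tau> i" unfolding i_def by (rule LeastI_ex[OF ex])
  have lt: "\<And>j. j < i \<Longrightarrow> \<sigma> j = \<tau> j" unfolding i_def using not_less_Least by blast
  have iin: "i \<in> {1..n}" using ne p q by (metis permutes_not_in)
  have injs: "inj \<sigma>" "inj \<tau>" using p q by (auto intro: permutes_inj)
  have imgs: "\<sigma> ` {1..n} = {1..n}" "\<tau> ` {1..n} = {1..n}" using permutes_image[OF p] permutes_image[OF q] by auto
  let ?A = "{j \<in> {1..n}. j < i}" let ?B = "{j \<in> {1..n}. j \<ge> i}"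
  have AB: "{1..n} = ?A \<union> ?B" "?A \<inter> ?B = {}" by auto
  have sA: "\<sigma> ` ?A = \<tau> ` ?A" using lt by (auto intro!: image_cong)
  have B: "?B = {1..n} - ?A" by auto
  have "\<sigma> ` ?B = {1..n} - \<sigma> ` ?A" unfolding B image_set_diff[OF injs(1)] imgs(1) ..
  moreover have "\<tau> ` ?B = {1..n} - \<tau> ` ?A" unfolding B image_set_diff[OF injs(2)] imgs(2) ..
  ultimately have V: "\<sigma> ` ?B = \<tau> ` ?B" using sA by simp
  define V where "V = \<sigma> ` ?B"
  have r1: "cc n \<sigma> i = card {v \<in> V. v < \<sigma> i}" using cc_rank[OF p iin] V_def by simp
  have r2: "cc n \<tau> i = card {v \<in> V. v < \<tau> i}" using cc_rank[OF q iin] V_def V by simp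
  have mem: "\<sigma> i \<in> V" "\<tau> i \<in> V" using iin V unfolding V_def by auto
  have fin: "finite V" unfolding V_def by auto
  have strict: "card {v \<in> V. v < a} < card {v \<in> V. v < b}" if "a \<in> V" "a < b" for a b
    by (rule psubset_card_mono) (use fin that in auto)
  show False
  proof (cases "\<sigma> i < \<tau> i")
    case True
    then show False using strict[OF mem(1) True] r1 r2 c[OF iin] by simp
  next
    case False
    then have lt2: "\<tau> i < \<sigma> i" using ne by simp
    show False using strict[OF mem(2) lt2] r1 r2 c[OF iin] by simp
  qed
qed

lemma lehmer_surj:
  assumes c: "c \<in> (\<Pi>\<^sub>E j\<in>{1..n}. {..n-j})"
  shows "\<exists>\<sigma>. \<sigma> permutes {1..n} \<and> (\<forall>j\<in>{1..n}. cc n \<sigma> j = c j)"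
proof -
  let ?P = "{\<sigma>. \<sigma> permutes {1..n}}"
  let ?Q = "(\<Pi>\<^sub>E j\<in>{1..n}. {..n-j})"
  define C where "C \<sigma> = restrict (cc n \<sigma>) {1..n}" for \<sigma>
  have inj: "inj_on C ?P"
  proof (rule inj_onI)
    fix \<sigma> \<tau> assume "\<sigma> \<in> ?P" "\<tau> \<in> ?P"
    assume e: "C \<sigma> = C \<tau>"
    have "cc n \<sigma> j = cc n \<tau> j" if "j \<in> {1..n}" for j
      using fun_cong[OF e, of j] that unfolding C_def by simp
    then show "\<sigma> = \<tau>" using \<open>\<sigma> \<in> ?P\<close> \<open>\<tau> \<in> ?P\<close> by (intro lehmer_inj[of \<sigma> n \<tau>]) auto
  qed
  have sub: "C ` ?P \<subseteq> ?Q" unfolding C_def using cc_le by auto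
  have cP: "card ?P = fact n" by (rule card_permutations) auto
  have "card ?Q = (\<Prod>j\<in>{1..n}. n + 1 - j)" by (simp add: card_PiE Suc_diff_le)
  also have "\<dots> = fact n" using prod.atLeastAtMost_rev [of "\<lambda>i. i" 1 n]
    by (simp add: fact_prod)
  finally have cQ: "card ?Q = fact n" .
  have fQ: "finite ?Q" by (intro finite_PiE) auto
  have "C ` ?P = ?Q"
    by (rule card_subset_eq[OF fQ sub]) (simp only: card_image[OF inj] cP cQ)
  then obtain \<sigma> where "\<sigma> \<in> ?P" "C \<sigma> = c" using c by (metis imageE)
  moreover have "cc n \<sigma> j = c j" if "j \<in> {1..n}" for j
    using fun_cong[OF \<open>C \<sigma> = c\<close>, of j] that unfolding C_def by simp
  ultimately show ?thesis by auto
qed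

definition shift :: "(nat \<Rightarrow> nat) \<Rightarrow> nat \<Rightarrow> nat" where
  "shift \<sigma> j = (case j of 0 \<Rightarrow> 0 | Suc i \<Rightarrow> Suc (\<sigma> i))"

lemma iota_shift:
  assumes p: "\<sigma> permutes {1..n}" shows "iota n \<sigma> = shift \<sigma>"
proof
  fix j
  have s0: "\<sigma> 0 = 0" using p by (simp add: permutes_not_in)
  have big: "\<sigma> i = i" if "i > n" for i using p that by (simp add: permutes_not_in)
  show "iota n \<sigma> j = shift \<sigma> j"
    unfolding iota_def shift_def using s0 big[of "j - 1"]
    by (cases j) auto
qed

lemma shift_perm:
  assumes p: "\<sigma> permutes {1..n}" shows "shift \<sigma> permutes {1..Suc n}"
proof -
  have s0: "\<sigma> 0 = 0" using p by (simp add: permutes_not_in)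
  have inj: "inj \<sigma>" using p by (rule permutes_inj)
  have sur: "surj \<sigma>" using p by (rule permutes_surj)
  have injs: "inj (shift \<sigma>)"
  proof (rule injI)
    fix x y assume "shift \<sigma> x = shift \<sigma> y"
    then show "x = y" using inj unfolding shift_def
      by (cases x; cases y) (auto dest: injD)
  qed
  have surs: "surj (shift \<sigma>)"
  proof -
    have "y \<in> range (shift \<sigma>)" for y
    proof (cases y)
      case 0 then show ?thesis by (metis rangeI shift_def old.nat.simps(4))
    next
      case (Suc z)
      then obtain x where "\<sigma> x = z" using sur by (metis surjD)
      then have "shift \<sigma> (Suc x) = y" using Suc by (simp add: shift_def)
      then show ?thesis by (metis rangeI)
    qed
    then show ?thesis by auto
  qed
  have stable: "shift \<sigma> x = x" if "x \<notin> {1..Suc n}" for x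
  proof (cases x)
    case 0 then show ?thesis by (simp add: shift_def)
  next
    case (Suc z) then have "z \<notin> {1..n}" using that by auto
    then show ?thesis using p Suc by (simp add: shift_def permutes_not_in)
  qed
  show ?thesis
    unfolding permutes_def using stable injs surs
    by (metis bij_betw_def bij_iff)
qed

lemma iota_perm: "\<sigma> permutes {1..n} \<Longrightarrow> iota n \<sigma> permutes {1..Suc n}"
  using iota_shift shift_perm by metis

lemma cc_shift_Suc:
  assumes p: "\<sigma> permutes {1..n}" shows "cc (Suc n) (shift \<sigma>) (Suc j) = cc n \<sigma> j"
proof -
  have "{j' \<in> {1..Suc n}. j' > Suc j \<and> shift \<sigma> j' < shift \<sigma> (Suc j)}
      = Suc ` {j' \<in> {1..n}. j' > j \<and> \<sigma> j' < \<sigma> j}"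
  proof (rule set_eqI, rule iffI)
    fix x assume x: "x \<in> {j' \<in> {1..Suc n}. j' > Suc j \<and> shift \<sigma> j' < shift \<sigma> (Suc j)}"
    then obtain z where z: "x = Suc z" by (cases x) auto
    show "x \<in> Suc ` {j' \<in> {1..n}. j' > j \<and> \<sigma> j' < \<sigma> j}"
      using x unfolding z by (auto simp: shift_def)
  qed (auto simp: shift_def)
  then show ?thesis unfolding cc_def by (simp add: card_image)
qed

lemma cc_shift_1:
  assumes p: "\<sigma> permutes {1..n}" shows "cc (Suc n) (shift \<sigma>) 1 = 0"
proof -
  have s0: "\<sigma> 0 = 0" using p by (simp add: permutes_not_in)
  have "{j' \<in> {1..Suc n}. j' > 1 \<and> shift \<sigma> j' < shift \<sigma> 1} = {}"
    using s0 by (auto simp: shift_def split: nat.splits)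
  then show ?thesis unfolding cc_def by simp
qed

definition Kf :: "nat \<Rightarrow> (nat \<Rightarrow> nat) \<Rightarrow> nat \<Rightarrow> nat" where
  "Kf n \<sigma> i = (if i < n then kk n \<sigma> i else 0)"

lemma Kf_iota:
  assumes p: "\<sigma> permutes {1..n}" shows "Kf (Suc n) (iota n \<sigma>) = Kf n \<sigma>"
proof
  fix i
  show "Kf (Suc n) (iota n \<sigma>) i = Kf n \<sigma> i"
  proof (cases "i < n")
    case True
    then have "Suc n - i = Suc (n - i)" by simp
    then show ?thesis using True cc_shift_Suc[OF p]
      by (simp add: Kf_def kk_def iota_shift[OF p])
  next
    case False
    then show ?thesis using cc_shift_1[OF p]
      by (cases "i = n") (simp_all add: Kf_def kk_def iota_shift[OF p])
  qed
qed

lemma iota_iter_props: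
  assumes p: "\<sigma> permutes {1..n}"
  shows "iota_iter d n \<sigma> permutes {1..n+d} \<and> Kf (n+d) (iota_iter d n \<sigma>) = Kf n \<sigma>"
proof (induction d)
  case 0 then show ?case using p by simp
next
  case (Suc d)
  then show ?case using iota_perm Kf_iota by simp
qed

lemma Kf_le: "Kf n \<sigma> i \<le> i"
  unfolding Kf_def kk_def using cc_le[of n \<sigma> "n - i"] by auto

lemma Kf_eq_imp:
  assumes p: "\<sigma> permutes {1..n}" and q: "\<tau> permutes {1..n}" and e: "Kf n \<sigma> = Kf n \<tau>"
  shows "\<sigma> = \<tau>"
proof (rule lehmer_inj[OF p q])
  fix j assume j: "j \<in> {1..n}"
  then have "n - j < n" "n - (n - j) = j" by auto
  then show "cc n \<sigma> j = cc n \<tau> j" using fun_cong[OF e, of "n - j"]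
    unfolding Kf_def kk_def by simp
qed



definition DD :: "(nat \<times> (nat \<Rightarrow> nat)) set" where
  "DD = (SIGMA n:{1..}. Sn n)"

definition Kp :: "nat \<times> (nat \<Rightarrow> nat) \<Rightarrow> nat \<Rightarrow> nat" where
  "Kp x = Kf (fst x) (snd x)"

definition wt :: "(nat \<Rightarrow> nat) \<Rightarrow> nat" where
  "wt k = (\<Sum>i\<in>{i. k i \<noteq> 0}. 2 ^ i - 2 ^ (i - k i))"

lemma limrel_iff: "limrel = {(x, y). x \<in> DD \<and> y \<in> DD \<and> Kp x = Kp y}"
proof (rule set_eqI, rule iffI)
  fix z assume "z \<in> limrel"
  then obtain n \<sigma> n' \<sigma>' N where z: "z = ((n, \<sigma>), (n', \<sigma>'))" and h: "n \<ge> 1" "n' \<ge> 1"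
    "\<sigma> \<in> Sn n" "\<sigma>' \<in> Sn n'" "N \<ge> n" "N \<ge> n'"
    "iota_iter (N - n) n \<sigma> = iota_iter (N - n') n' \<sigma>'"
    unfolding limrel_def by auto
  have "Kf n \<sigma> = Kf n' \<sigma>'"
    using iota_iter_props[of \<sigma> n "N - n"] iota_iter_props[of \<sigma>' n' "N - n'"] h
    by (simp add: Sn_def)
  then show "z \<in> {(x, y). x \<in> DD \<and> y \<in> DD \<and> Kp x = Kp y}"
    using z h by (simp add: DD_def Kp_def)
next
  fix z assume "z \<in> {(x, y). x \<in> DD \<and> y \<in> DD \<and> Kp x = Kp y}"
  then obtain n \<sigma> n' \<sigma>' where z: "z = ((n, \<sigma>), (n', \<sigma>'))" and h: "n \<ge> 1" "n' \<ge> 1"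
    "\<sigma> permutes {1..n}" "\<sigma>' permutes {1..n'}" "Kf n \<sigma> = Kf n' \<sigma>'"
    unfolding DD_def Kp_def Sn_def by auto
  define N where "N = max n n'"
  have a: "iota_iter (N - n) n \<sigma> permutes {1..N}" "Kf N (iota_iter (N - n) n \<sigma>) = Kf n \<sigma>"
    using iota_iter_props[OF h(3), of "N - n"] unfolding N_def by auto
  have b: "iota_iter (N - n') n' \<sigma>' permutes {1..N}" "Kf N (iota_iter (N - n') n' \<sigma>') = Kf n' \<sigma>'"
    using iota_iter_props[OF h(4), of "N - n'"] unfolding N_def by auto
  have "iota_iter (N - n) n \<sigma> = iota_iter (N - n') n' \<sigma>'"
    using Kf_eq_imp[OF a(1) b(1)] a(2) b(2) h(5) by simp
  then show "z \<in> limrel" unfolding limrel_def z using h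
    by (auto simp: Sn_def N_def intro!: exI[of _ "max n n'"])
qed

lemma cls_eq: "x \<in> DD \<Longrightarrow> limrel `` {x} = {y \<in> DD. Kp y = Kp x}"
  unfolding limrel_iff by auto

lemma S_inf_eq: "S_inf = (\<lambda>x. {y \<in> DD. Kp y = Kp x}) ` DD"
  unfolding S_inf_def DD_def[symmetric] quotient_def using cls_eq by auto

lemma LF2_wt:
  assumes "\<sigma> permutes {1..n}" shows "LF2 n \<sigma> = wt (Kf n \<sigma>)"
proof -
  have "LF2 n \<sigma> = (\<Sum>i<n. 2 ^ i - 2 ^ (i - Kf n \<sigma> i))"
    unfolding LF2_def Kf_def by simp
  also have "\<dots> = wt (Kf n \<sigma>)" unfolding wt_def
    by (rule sum.mono_neutral_right) (auto simp: Kf_def split: if_splits)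
  finally show ?thesis .
qed

lemma LF2_inf_cls:
  assumes x: "x \<in> DD" shows "LF2_inf {y \<in> DD. Kp y = Kp x} = wt (Kp x)"
proof -
  have "(\<lambda>(n, \<sigma>). LF2 n \<sigma>) ` {y \<in> DD. Kp y = Kp x} = {wt (Kp x)}"
  proof
    show "(\<lambda>(n, \<sigma>). LF2 n \<sigma>) ` {y \<in> DD. Kp y = Kp x} \<subseteq> {wt (Kp x)}"
      by (auto simp: DD_def Sn_def Kp_def LF2_wt)
    show "{wt (Kp x)} \<subseteq> (\<lambda>(n, \<sigma>). LF2 n \<sigma>) ` {y \<in> DD. Kp y = Kp x}"
      using x by (auto simp: DD_def Sn_def Kp_def LF2_wt intro!: image_eqI[of _ _ x])
  qed
  then show ?thesis unfolding LF2_inf_def by simp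
qed

definition AA :: "(nat \<Rightarrow> nat) set" where
  "AA = {k. (\<forall>i. k i \<le> i) \<and> finite {i. k i \<noteq> 0}}"

lemma Kp_image: "Kp ` DD = AA"
proof
  show "Kp ` DD \<subseteq> AA"
  proof
    fix k assume "k \<in> Kp ` DD"
    then obtain n \<sigma> where k: "k = Kf n \<sigma>" unfolding Kp_def by auto
    have "{i. k i \<noteq> 0} \<subseteq> {..<n}" unfolding k Kf_def by auto
    then show "k \<in> AA" unfolding AA_def using Kf_le k finite_subset by blast
  qed
next
  show "AA \<subseteq> Kp ` DD"
  proof
    fix k assume k: "k \<in> AA"
    then obtain n0 where "{i. k i \<noteq> 0} \<subseteq> {..<n0}" unfolding AA_def
      by (auto simp: finite_nat_set_iff_bounded subset_eq)
    define n where "n = max 1 n0"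
    have zero: "k i = 0" if "i \<ge> n" for i using \<open>{i. k i \<noteq> 0} \<subseteq> {..<n0}\<close> that
      unfolding n_def by force
    have kle: "k i \<le> i" for i using k unfolding AA_def by auto
    have "restrict (\<lambda>j. k (n - j)) {1..n} \<in> (\<Pi>\<^sub>E j\<in>{1..n}. {..n-j})"
      using kle by auto
    from lehmer_surj[OF this] obtain \<sigma> where s: "\<sigma> permutes {1..n}"
      "\<forall>j\<in>{1..n}. cc n \<sigma> j = restrict (\<lambda>j. k (n - j)) {1..n} j" by blast
    have "Kf n \<sigma> = k"
    proof
      fix i show "Kf n \<sigma> i = k i"
      proof (cases "i < n")
        case True
        then have "n - i \<in> {1..n}" "n - (n - i) = i" by auto
        then show ?thesis using s(2) True by (simp add: Kf_def kk_def)
      next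
        case False then show ?thesis using zero by (simp add: Kf_def)
      qed
    qed
    moreover have "(n, \<sigma>) \<in> DD" using s(1) unfolding DD_def Sn_def n_def by auto
    ultimately show "k \<in> Kp ` DD" unfolding Kp_def by force
  qed
qed

lemma part1:
  "bij_betw (\<lambda>X. the_elem (Kp ` X)) {X \<in> S_inf. LF2_inf X = m} {k \<in> AA. wt k = m}"
proof -
  define cls where "cls x = {y \<in> DD. Kp y = Kp x}" for x
  define B where "B = {x \<in> DD. wt (Kp x) = m}"
  have ph: "the_elem (Kp ` cls x) = Kp x" if "x \<in> DD" for x
  proof -
    have "Kp ` cls x = {Kp x}" using that unfolding cls_def by auto
    then show ?thesis by simp
  qed
  have lf: "LF2_inf (cls x) = wt (Kp x)" if "x \<in> DD" for x
    using LF2_inf_cls[OF that] unfolding cls_def .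
  have SI: "S_inf = cls ` DD" unfolding S_inf_eq cls_def ..
  have S: "{X \<in> S_inf. LF2_inf X = m} = cls ` B"
  proof (rule set_eqI)
    fix X
    show "X \<in> {X \<in> S_inf. LF2_inf X = m} \<longleftrightarrow> X \<in> cls ` B"
    proof
      assume "X \<in> {X \<in> S_inf. LF2_inf X = m}"
      then obtain x where x: "x \<in> DD" "X = cls x" "LF2_inf X = m" unfolding SI by blast
      then have "x \<in> B" using lf unfolding B_def by simp
      then show "X \<in> cls ` B" using x(2) by blast
    next
      assume "X \<in> cls ` B"
      then obtain x where x: "x \<in> DD" "X = cls x" "wt (Kp x) = m" unfolding B_def by blast
      then show "X \<in> {X \<in> S_inf. LF2_inf X = m}" unfolding SI using lf by simp
    qed
  qed
  have inj: "inj_on (\<lambda>X. the_elem (Kp ` X)) (cls ` B)"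
  proof (rule inj_onI)
    fix X Y assume X: "X \<in> cls ` B" and Y: "Y \<in> cls ` B"
      and e: "the_elem (Kp ` X) = the_elem (Kp ` Y)"
    from X obtain x where x: "x \<in> DD" "X = cls x" unfolding B_def by blast
    from Y obtain y where y: "y \<in> DD" "Y = cls y" unfolding B_def by blast
    have "Kp x = Kp y" using e ph x y by simp
    then show "X = Y" unfolding x y cls_def by simp
  qed
  have "(\<lambda>X. the_elem (Kp ` X)) ` cls ` B = Kp ` B"
    unfolding image_image using ph unfolding B_def by (intro image_cong) auto
  also have "\<dots> = {k \<in> Kp ` DD. wt k = m}" unfolding B_def by blast
  also have "\<dots> = {k \<in> AA. wt k = m}" unfolding Kp_image ..
  finally have img: "(\<lambda>X. the_elem (Kp ` X)) ` cls ` B = {k \<in> AA. wt k = m}" .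
  show ?thesis unfolding S using inj img by (simp add: bij_betw_def)
qed



definition LL :: "(nat \<times> nat) list set" where
  "LL = {ps. sorted_wrt (\<lambda>a b. fst a > fst b) ps \<and> (\<forall>(mj, lj) \<in> set ps. lj \<le> mj)}"

definition W :: "(nat \<times> nat) list \<Rightarrow> nat" where
  "W ps = (\<Sum>(mj, lj) \<leftarrow> ps. \<Sum>p = 0..lj. 2 ^ (mj - p))"

definition ff :: "(nat \<Rightarrow> nat) \<Rightarrow> (nat \<times> nat) list" where
  "ff k = map (\<lambda>i. (i - 1, k i - 1)) (rev (sorted_list_of_set {i. k i \<noteq> 0}))"

definition gg :: "(nat \<times> nat) list \<Rightarrow> nat \<Rightarrow> nat" where
  "gg ps i = (if i = 0 then 0 else case map_of ps (i - 1) of None \<Rightarrow> 0 | Some l \<Rightarrow> Suc l)"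

lemma sorted_unique:
  fixes xs ys :: "(nat \<times> nat) list"
  shows "sorted_wrt (\<lambda>a b. fst a > fst b) xs \<Longrightarrow> sorted_wrt (\<lambda>a b. fst a > fst b) ys
   \<Longrightarrow> set xs = set ys \<Longrightarrow> xs = ys"
proof (induction xs arbitrary: ys)
  case Nil then show ?case by simp
next
  case (Cons x xs)
  then obtain y ys' where ys: "ys = y # ys'" by (cases ys) auto
  have xy: "x = y"
  proof (rule ccontr)
    assume "x \<noteq> y"
    moreover have "x \<in> set (y # ys')" using Cons.prems(3) ys by (metis list.set_intros(1))
    moreover have "y \<in> set (x # xs)" using Cons.prems(3) ys by (metis list.set_intros(1))
    ultimately have "x \<in> set ys'" "y \<in> set xs" by auto
    have "fst x < fst y" using \<open>x \<in> set ys'\<close> Cons.prems(2) ys by auto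
    moreover have "fst y < fst x" using \<open>y \<in> set xs\<close> Cons.prems(1) by auto
    ultimately show False by simp
  qed
  have "x \<notin> set xs" using Cons.prems(1) by auto
  moreover have "x \<notin> set ys'" using Cons.prems(2) ys xy by auto
  ultimately have "set xs = set ys'" using Cons.prems(3) ys xy by (auto simp: set_eq_iff)
  then show ?case using Cons.IH[of ys'] Cons.prems ys xy by simp
qed

lemma sorted_distinct_fst:
  fixes ps :: "(nat \<times> nat) list"
  shows "sorted_wrt (\<lambda>a b. fst a > fst b) ps \<Longrightarrow> distinct (map fst ps)"
proof (induction ps)
  case Nil then show ?case by simp
next
  case (Cons a ps)
  then have "\<forall>x\<in>set ps. fst x < fst a" by simp
  then have "fst a \<notin> fst ` set ps" by (metis imageE less_irrefl)
  then show ?case using Cons by simp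
qed

lemma set_ff: "finite {i. k i \<noteq> 0} \<Longrightarrow> set (ff k) = (\<lambda>i. (i - 1, k i - 1)) ` {i. k i \<noteq> 0}"
  unfolding ff_def by simp

lemma ff_LL: assumes k: "k \<in> AA" shows "ff k \<in> LL"
proof -
  have fin: "finite {i. k i \<noteq> 0}" and le: "\<And>i. k i \<le> i" using k unfolding AA_def by auto
  have pos: "i \<ge> 1" if "k i \<noteq> 0" for i using le[of i] that by (cases i) auto
  have ss: "sorted_wrt (<) (sorted_list_of_set {i. k i \<noteq> 0})" by simp
  have "sorted_wrt (\<lambda>x y. y - 1 < x - 1) (rev (sorted_list_of_set {i. k i \<noteq> 0}))"
    unfolding sorted_wrt_rev
  proof (rule sorted_wrt_mono_rel[OF _ ss])
    fix x y assume "x \<in> set (sorted_list_of_set {i. k i \<noteq> 0})" "x < y"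
    then have "k x \<noteq> 0" using fin by simp
    then have "x \<ge> 1" using pos by simp
    then show "x - 1 < y - 1" using \<open>x < y\<close> by simp
  qed
  then have "sorted_wrt (\<lambda>a b. fst a > fst b) (ff k)"
    unfolding ff_def sorted_wrt_map by simp
  moreover have "\<forall>(mj, lj) \<in> set (ff k). lj \<le> mj"
    using le unfolding set_ff[OF fin] by (auto simp: diff_le_mono)
  ultimately show ?thesis unfolding LL_def by simp
qed

lemma gg_AA: assumes ps: "ps \<in> LL" shows "gg ps \<in> AA"
proof -
  have d: "distinct (map fst ps)" using ps sorted_distinct_fst unfolding LL_def by auto
  have le: "gg ps i \<le> i" for i
  proof (cases "i = 0 \<or> map_of ps (i - 1) = None")
    case True then show ?thesis unfolding gg_def by auto
  next
    case False
    then obtain l where "map_of ps (i - 1) = Some l" "i \<noteq> 0" by auto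
    moreover then have "(i - 1, l) \<in> set ps" using d by simp
    then have "l \<le> i - 1" using ps unfolding LL_def by auto
    ultimately show ?thesis unfolding gg_def by simp
  qed
  have "{i. gg ps i \<noteq> 0} \<subseteq> Suc ` fst ` set ps"
  proof
    fix i assume "i \<in> {i. gg ps i \<noteq> 0}"
    then have "i \<noteq> 0" "map_of ps (i - 1) \<noteq> None" unfolding gg_def by (auto split: if_splits option.splits)
    then show "i \<in> Suc ` fst ` set ps" by (metis Suc_pred' bot_nat_0.not_eq_extremum image_eqI map_of_eq_None_iff)
  qed
  then have "finite {i. gg ps i \<noteq> 0}" by (rule finite_subset) auto
  then show ?thesis using le unfolding AA_def by auto
qed

lemma gg_ff: assumes k: "k \<in> AA" shows "gg (ff k) = k"
proof
  fix i
  have fin: "finite {i. k i \<noteq> 0}" and le: "\<And>i. k i \<le> i" using k unfolding AA_def by auto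
  have d: "distinct (map fst (ff k))" using ff_LL[OF k] sorted_distinct_fst unfolding LL_def by auto
  show "gg (ff k) i = k i"
  proof (cases i)
    case 0 then show ?thesis using le[of 0] unfolding gg_def by simp
  next
    case (Suc j)
    show ?thesis
    proof (cases "k i = 0")
      case True
      have "j \<notin> fst ` set (ff k)"
      proof
        assume "j \<in> fst ` set (ff k)"
        then obtain i' where "k i' \<noteq> 0" "i' - 1 = j" unfolding set_ff[OF fin] by auto
        moreover then have "i' \<ge> 1" using le[of i'] by (cases i') auto
        ultimately have "i' = i" using Suc by simp
        then show False using True \<open>k i' \<noteq> 0\<close> by simp
      qed
      then have "map_of (ff k) j = None" by (simp add: map_of_eq_None_iff)
      then show ?thesis using True Suc unfolding gg_def by simp
    next
      case False
      then have "(j, k i - 1) \<in> set (ff k)" unfolding set_ff[OF fin] using Suc by force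
      then have "map_of (ff k) j = Some (k i - 1)" using d by simp
      then show ?thesis using False Suc unfolding gg_def by simp
    qed
  qed
qed

lemma ff_gg: assumes ps: "ps \<in> LL" shows "ff (gg ps) = ps"
proof -
  have d: "distinct (map fst ps)" using ps sorted_distinct_fst unfolding LL_def by auto
  have A: "gg ps \<in> AA" by (rule gg_AA[OF ps])
  then have fin: "finite {i. gg ps i \<noteq> 0}" unfolding AA_def by auto
  have "set (ff (gg ps)) = set ps"
  proof
    show "set (ff (gg ps)) \<subseteq> set ps"
    proof
      fix z assume "z \<in> set (ff (gg ps))"
      then obtain i where i: "gg ps i \<noteq> 0" "z = (i - 1, gg ps i - 1)" unfolding set_ff[OF fin] by auto
      have i0: "i \<noteq> 0" using i(1) unfolding gg_def by (cases "i = 0") auto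
      have "map_of ps (i - 1) \<noteq> None" using i(1) i0 unfolding gg_def by (cases "map_of ps (i - 1)") auto
      then obtain l where l: "map_of ps (i - 1) = Some l" by auto
      then have "gg ps i = Suc l" using i0 unfolding gg_def by simp
      then have "z = (i - 1, l)" using i(2) by simp
      then show "z \<in> set ps" using map_of_SomeD[OF l] by simp
    qed
  next
    show "set ps \<subseteq> set (ff (gg ps))"
    proof
      fix z assume z: "z \<in> set ps"
      obtain a l where al: "z = (a, l)" by (cases z)
      then have "map_of ps a = Some l" using z d by simp
      then have "gg ps (Suc a) = Suc l" unfolding gg_def by simp
      then show "z \<in> set (ff (gg ps))" unfolding set_ff[OF fin] al
        by (intro image_eqI[of _ _ "Suc a"]) auto
    qed
  qed
  moreover have "sorted_wrt (\<lambda>a b. fst a > fst b) (ff (gg ps))" using ff_LL[OF A] unfolding LL_def by simp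
  moreover have "sorted_wrt (\<lambda>a b. fst a > fst b) ps" using ps unfolding LL_def by simp
  ultimately show ?thesis using sorted_unique by blast
qed

lemma geom: "l \<le> a \<Longrightarrow> (\<Sum>p = 0..l. (2::nat) ^ (a - p)) = 2 ^ Suc a - 2 ^ (a - l)"
proof (induction l)
  case 0 then show ?case by simp
next
  case (Suc l)
  have e: "(2::nat) ^ (a - l) = 2 * 2 ^ (a - Suc l)" using Suc.prems
    by (metis Suc_diff_Suc Suc_le_lessD power_Suc)
  have le: "(2::nat) ^ (a - l) \<le> 2 ^ Suc a" by (rule power_increasing) auto
  have "(\<Sum>p = 0..Suc l. (2::nat) ^ (a - p)) = 2 ^ Suc a - 2 ^ (a - l) + 2 ^ (a - Suc l)"
    using Suc by simp
  also have "\<dots> = 2 ^ Suc a - 2 ^ (a - Suc l)" using e le by simp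
  finally show ?case .
qed

lemma W_ff: assumes k: "k \<in> AA" shows "W (ff k) = wt k"
proof -
  have fin: "finite {i. k i \<noteq> 0}" and le: "\<And>i. k i \<le> i" using k unfolding AA_def by auto
  define h where "h = (\<lambda>(mj, lj). \<Sum>p = 0..lj. (2::nat) ^ (mj - p))"
  define e where "e = (\<lambda>i. (i - 1, k i - 1))"
  have "W (ff k) = sum_list (map (h \<circ> e) (rev (sorted_list_of_set {i. k i \<noteq> 0})))"
    unfolding W_def ff_def h_def e_def by (simp add: comp_def)
  also have "\<dots> = sum_list (map (h \<circ> e) (sorted_list_of_set {i. k i \<noteq> 0}))"
    by (simp add: rev_map[symmetric] sum_list_rev)
  also have "\<dots> = sum (h \<circ> e) {i. k i \<noteq> 0}"
    using fin by (simp add: sum_list_distinct_conv_sum_set)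
  also have "\<dots> = wt k" unfolding wt_def
  proof (rule sum.cong[OF refl])
    fix i assume "i \<in> {i. k i \<noteq> 0}"
    then have "k i \<ge> 1" "k i \<le> i" using le[of i] by auto
    then have "k i - 1 \<le> i - 1" "Suc (i - 1) = i" "i - 1 - (k i - 1) = i - k i" by auto
    then show "(h \<circ> e) i = 2 ^ i - 2 ^ (i - k i)"
      unfolding h_def e_def using geom[of "k i - 1" "i - 1"] by simp
  qed
  finally show ?thesis .
qed

lemma part2: "bij_betw ff {k \<in> AA. wt k = m} {ps \<in> LL. W ps = m}"
proof (rule bij_betw_byWitness[where f'=gg])
  show "\<forall>a\<in>{k \<in> AA. wt k = m}. gg (ff a) = a" using gg_ff by blast
  show "\<forall>a'\<in>{ps \<in> LL. W ps = m}. ff (gg a') = a'" using ff_gg by blast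
  show "ff ` {k \<in> AA. wt k = m} \<subseteq> {ps \<in> LL. W ps = m}"
    using ff_LL W_ff by auto
  show "gg ` {ps \<in> LL. W ps = m} \<subseteq> {k \<in> AA. wt k = m}"
  proof
    fix k assume "k \<in> gg ` {ps \<in> LL. W ps = m}"
    then obtain ps where ps: "ps \<in> LL" "W ps = m" "k = gg ps" by auto
    then have "k \<in> AA" using gg_AA by simp
    moreover have "wt k = m" using W_ff[OF \<open>k \<in> AA\<close>] ps ff_gg by simp
    ultimately show "k \<in> {k \<in> AA. wt k = m}" by simp
  qed
qed


lemma W_Cons: "W (p # ps) = (\<Sum>q = 0..snd p. 2 ^ (fst p - q)) + W ps"
  unfolding W_def by (cases p) simp

lemma W_ge: assumes "ps \<noteq> []" shows "2 ^ fst (hd ps) \<le> W ps"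
proof -
  obtain p ps' where ps: "ps = p # ps'" using assms by (cases ps) auto
  have "(2::nat) ^ (fst p - 0) \<le> (\<Sum>q = 0..snd p. 2 ^ (fst p - q))"
    by (rule member_le_sum) auto
  then show ?thesis unfolding ps W_Cons by simp
qed

lemma term_ge: assumes "1 \<le> k" "k \<le> i" shows "i \<le> (2::nat) ^ i - 2 ^ (i - k)"
proof -
  obtain j where j: "i = Suc j" using assms by (cases i) auto
  have "(2::nat) ^ (i - k) \<le> 2 ^ j" using assms j by (intro power_increasing) auto
  moreover have "Suc j \<le> 2 ^ j" by (rule Suc_leI[OF less_exp])
  moreover have "(2::nat) ^ i = 2 * 2 ^ j" unfolding j by simp
  ultimately show ?thesis using j by linarith
qed

lemma finite_A: "finite {k \<in> AA. wt k = m}"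
proof -
  have "{k \<in> AA. wt k = m} \<subseteq> {f. \<forall>x. (x \<in> {..m} \<longrightarrow> f x \<in> {..m}) \<and> (x \<notin> {..m} \<longrightarrow> f x = 0)}"
  proof
    fix k assume k: "k \<in> {k \<in> AA. wt k = m}"
    have fin: "finite {i. k i \<noteq> 0}" and le: "\<And>i. k i \<le> i" using k unfolding AA_def by auto
    have b: "i \<le> m" if "k i \<noteq> 0" for i
    proof -
      have "i \<le> 2 ^ i - 2 ^ (i - k i)" using that le[of i] by (intro term_ge) auto
      also have "\<dots> \<le> wt k" unfolding wt_def
        by (rule member_le_sum) (use that fin in auto)
      finally show ?thesis using k by simp
    qed
    have "k x \<le> m" for x using b[of x] le[of x] by (cases "k x = 0") auto
    moreover have "k x = 0" if "x > m" for x using b[of x] that by (cases "k x = 0") auto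
    ultimately show "k \<in> {f. \<forall>x. (x \<in> {..m} \<longrightarrow> f x \<in> {..m}) \<and> (x \<notin> {..m} \<longrightarrow> f x = 0)}"
      by auto
  qed
  moreover have "finite {f. \<forall>x. (x \<in> {..m} \<longrightarrow> f x \<in> {..m}) \<and> (x \<notin> {..m} \<longrightarrow> f x = (0::nat))}"
    by (rule finite_set_of_finite_funs) auto
  ultimately show ?thesis by (rule finite_subset)
qed

lemma s_card:
  assumes finL: "finite {ps \<in> LL. W ps = m}"
  shows "s m = card {ps \<in> LL. W ps = m}"
proof (cases "m = 0")
  case True
  have "{ps \<in> LL. W ps = m} = {[]}"
  proof
    show "{ps \<in> LL. W ps = m} \<subseteq> {[]}"
    proof
      fix ps assume ps: "ps \<in> {ps \<in> LL. W ps = m}"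
      show "ps \<in> {[]}"
      proof (rule ccontr)
        assume "ps \<notin> {[]}"
        then have "2 ^ fst (hd ps) \<le> W ps" using W_ge by auto
        moreover have "(0::nat) < 2 ^ fst (hd ps)" by simp
        ultimately show False using ps True by simp
      qed
    qed
    show "{[]} \<subseteq> {ps \<in> LL. W ps = m}" using True by (simp add: LL_def W_def)
  qed
  then show ?thesis using True by (simp add: s_def)
next
  case False
  have SkW: "Sk k m \<subseteq> {ps \<in> LL. W ps = m}" for k
    unfolding Sk_def LL_def W_def by auto
  have Skk: "k \<le> m" if "ps \<in> Sk k m" for ps k
  proof -
    have "ps \<noteq> []" "fst (hd ps) = k" using that unfolding Sk_def by auto
    then have "2 ^ k \<le> W ps" using W_ge by metis
    moreover have "W ps = m" using SkW that by auto
    ultimately show ?thesis using less_exp[of k] by linarith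
  qed
  have U: "{ps \<in> LL. W ps = m} = (\<Union>k\<in>{..m}. Sk k m)"
  proof
    show "(\<Union>k\<in>{..m}. Sk k m) \<subseteq> {ps \<in> LL. W ps = m}" using SkW by auto
    show "{ps \<in> LL. W ps = m} \<subseteq> (\<Union>k\<in>{..m}. Sk k m)"
    proof
      fix ps assume ps: "ps \<in> {ps \<in> LL. W ps = m}"
      then have "ps \<noteq> []" using False by (auto simp: W_def)
      then have "ps \<in> Sk (fst (hd ps)) m" using ps unfolding Sk_def LL_def W_def by auto
      then show "ps \<in> (\<Union>k\<in>{..m}. Sk k m)" using Skk by auto
    qed
  qed
  have finS: "finite (Sk k m)" for k using SkW finL by (rule finite_subset)
  have "card {ps \<in> LL. W ps = m} = (\<Sum>k\<in>{..m}. card (Sk k m))"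
  proof -
    have disj: "\<forall>i\<in>{..m}. \<forall>j\<in>{..m}. i \<noteq> j \<longrightarrow> Sk i m \<inter> Sk j m = {}"
      unfolding Sk_def by auto
    have "\<forall>i\<in>{..m}. finite (Sk i m)" using finS by simp
    then show ?thesis unfolding U using card_UN_disjoint[OF _ _ disj] by simp
  qed
  also have "\<dots> = (\<Sum>k \<in> {k. sk k m \<noteq> 0}. sk k m)" unfolding sk_def
  proof (rule sum.mono_neutral_right)
    show "{k. card (Sk k m) \<noteq> 0} \<subseteq> {..m}"
    proof
      fix k assume "k \<in> {k. card (Sk k m) \<noteq> 0}"
      then obtain ps where "ps \<in> Sk k m" by fastforce
      then show "k \<in> {..m}" using Skk by auto
    qed
  qed auto
  finally show ?thesis using False by (simp add: s_def)
qed

theorem theorem4p5: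
  fixes m :: nat
  shows "finite {X \<in> S_inf. LF2_inf X = m} \<and> s m = card {X \<in> S_inf. LF2_inf X = m}"
proof -
  note b1 = part1[of m] and b2 = part2[of m]
  have f1: "finite {X \<in> S_inf. LF2_inf X = m}" using bij_betw_finite[OF b1] finite_A by simp
  have finL: "finite {ps \<in> LL. W ps = m}" using bij_betw_finite[OF b2] finite_A by simp
  have "card {X \<in> S_inf. LF2_inf X = m} = card {ps \<in> LL. W ps = m}"
    using bij_betw_same_card[OF b1] bij_betw_same_card[OF b2] by simp
  then show ?thesis using f1 s_card[OF finL] by simp
qed

end
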